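(* Let $f:\mathbb{R}^n\to\mathbb{R}$ be convex and continuously differentiable, with $|f(x)-f(y)|\le L_0\|x-y\|$ and $\|\nabla f(x)-\nabla f(y)\|\le L_1\|x-y\|$ for all $x,y$. Let $\tilde f(x;\xi)=f(x)[1+\nu(x;\xi)]$, where $\nu$ is i.i.d. with $\mathbb{E}[\nu]=0$, variance $\sigma_r^2>0$, $\mathbb{E}[\frac{1}{1+\nu}]\le b$, and support contained in $[-a,a]$ for some $a<1$. Let $u\in\mathbb{R}^n$ be standard Gaussian and let $u,\xi_1,\xi_2,\xi_3$ be independent. Let $x\in\mathbb{R}^n$ with $f(x)\neq0$ and set $$\tilde\mu=C_4\sqrt{|\tilde f(x;\xi_3)|},\qquad C_4=\left[\frac{16\sigma_r^2 n}{L_1^2(1+3\sigma_r^2)(n+6)^3}\right]^{1/4},$$ and $$\mathcal{E}(\tilde\mu)=\left\|\frac{\tilde f(x+\tilde\mu u;\xi_1)-\tilde f(x;\xi_2)}{\tilde\mu}u-\langle\nabla f(x),u\rangle u\right\|^2 .$$ Then $$\mathbb{E}_{u,\xi_1,\xi_2,\xi_3}[\mathcal{E}(\tilde\mu)]\le(1+b)L_1\sigma_r\sqrt{(1+3\sigma_r^2)n(n+6)^3}\,|f(x)|+3L_0^2\sigma_r^2(n+4)^2.$$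
   Context: $\|\cdot\|$ is the Euclidean norm; "standard Gaussian" means mean $0$ and covariance $I_n$. The noise values in the three evaluations (at $x+\tilde\mu u$ with $\xi_1$, at $x$ with $\xi_2$, at $x$ with $\xi_3$) are independent copies of $\nu$. *)

theory Defs
  imports "HOL-Probability.Probability"
begin

definition std_gaussian :: "'a::euclidean_space measure" where
  "std_gaussian = density lborel (\<lambda>x. ennreal (\<Prod>b\<in>Basis. std_normal_density (x \<bullet> b)))"

end

theory Submission imports Defs begin

lemma std_moment_nn:
  "(\<integral>\<^sup>+y. ennreal (std_normal_density y * y^(2*k)) \<partial>lborel) = ennreal (fact (2*k) / (2^k * fact k))"
proof -
  have "(\<integral>\<^sup>+y. ennreal (std_normal_density y * y^(2*k)) \<partial>lborel) = ennreal (integral\<^sup>L lborel (\<lambda>y. std_normal_density y * y^(2*k)))"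
    by (rule nn_integral_eq_integral) (auto intro: integrable.intros[OF std_normal_moment_even] simp: normal_density_nonneg zero_le_even_power)
  then show ?thesis using integral_std_normal_moment_even by simp
qed

lemma binom_int:
  assumes S: "S \<ge> 0"
  shows "(\<integral>\<^sup>+y. ennreal (std_normal_density y * (S + y^2)^k) \<partial>lborel)
     = ennreal (\<Sum>j\<le>k. real (k choose j) * (fact (2*j) / (2^j * fact j)) * S^(k-j))"
proof -
  have eq: "std_normal_density y * (S + y^2)^k = (\<Sum>j\<le>k. (real (k choose j) * S^(k-j)) * (std_normal_density y * y^(2*j)))" for y
  proof -
    have "(S + y^2)^k = (\<Sum>j\<le>k. real (k choose j) * (y^2)^j * S^(k-j))"
      by (subst add.commute) (rule binomial_ring)
    then show ?thesis by (simp add: sum_distrib_left power_mult mult_ac flip: power_mult power_even_eq)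
  qed
  have "(\<integral>\<^sup>+y. ennreal (std_normal_density y * (S + y^2)^k) \<partial>lborel)
      = (\<integral>\<^sup>+y. (\<Sum>j\<le>k. ennreal (real (k choose j) * S^(k-j)) * ennreal (std_normal_density y * y^(2*j))) \<partial>lborel)"
    unfolding eq
    by (intro nn_integral_cong, subst sum_ennreal[symmetric])
       (auto simp: S normal_density_nonneg zero_le_even_power ennreal_mult)
  also have "\<dots> = (\<Sum>j\<le>k. ennreal (real (k choose j) * S^(k-j)) * ennreal (fact (2*j) / (2^j * fact j)))"
    by (subst nn_integral_sum) (auto simp: nn_integral_cmult std_moment_nn)
  also have "\<dots> = ennreal (\<Sum>j\<le>k. real (k choose j) * (fact (2*j) / (2^j * fact j)) * S^(k-j))"
    by (subst sum_ennreal[symmetric]) (auto simp: S ennreal_mult[symmetric] mult_ac intro!: sum.cong)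
  finally show ?thesis .
qed

definition Wt :: "'b set \<Rightarrow> ('b \<Rightarrow> real) \<Rightarrow> real" where
  "Wt I x = (\<Prod>b\<in>I. std_normal_density (x b))"
definition SS :: "'b set \<Rightarrow> ('b \<Rightarrow> real) \<Rightarrow> real" where
  "SS I x = (\<Sum>b\<in>I. (x b)^2)"
definition Qm :: "'b set \<Rightarrow> nat \<Rightarrow> ennreal" where
  "Qm I k = (\<integral>\<^sup>+x. ennreal (Wt I x * SS I x ^ k) \<partial>(PiM I (\<lambda>_. lborel::real measure)))"

lemma Wt_nonneg: "Wt I x \<ge> 0" unfolding Wt_def by (auto intro: prod_nonneg simp: normal_density_nonneg)
lemma SS_nonneg: "SS I x \<ge> 0" unfolding SS_def by (auto intro: sum_nonneg)

lemma Qm_empty: "Qm {} k = (if k = 0 then 1 else 0)"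
  unfolding Qm_def by (simp add: PiM_empty Wt_def SS_def nn_integral_count_space_finite)

lemma Qm_insert:
  assumes I: "finite I" "i \<notin> I"
  shows "Qm (insert i I) k = (\<Sum>j\<le>k. ennreal (real (k choose j) * (fact (2*j) / (2^j * fact j))) * Qm I (k-j))"
proof -
  interpret product_sigma_finite "\<lambda>_::'b. lborel::real measure"
    by (simp add: product_sigma_finite_def sigma_finite_lborel)
  have meas: "(\<lambda>x. ennreal (Wt (insert i I) x * SS (insert i I) x ^ k)) \<in> borel_measurable (PiM (insert i I) (\<lambda>_. lborel::real measure))"
    unfolding Wt_def SS_def by measurable
  have upd: "Wt (insert i I) (x(i:=y)) = std_normal_density y * Wt I x"
       "SS (insert i I) (x(i:=y)) = SS I x + y^2" for x y
    using I unfolding Wt_def SS_def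
    by (auto intro!: prod.cong sum.cong simp: add.commute)
  have "Qm (insert i I) k = (\<integral>\<^sup>+x. (\<integral>\<^sup>+y. ennreal (Wt I x) * ennreal (std_normal_density y * (SS I x + y^2)^k) \<partial>lborel) \<partial>(PiM I (\<lambda>_. lborel)))"
    unfolding Qm_def
    by (subst product_nn_integral_insert[OF I meas])
       (auto simp: upd mult_ac Wt_nonneg SS_nonneg normal_density_nonneg ennreal_mult' intro!: nn_integral_cong)
  also have "\<dots> = (\<integral>\<^sup>+x. (\<Sum>j\<le>k. ennreal (real (k choose j) * (fact (2*j) / (2^j * fact j))) * ennreal (Wt I x * SS I x ^ (k-j))) \<partial>(PiM I (\<lambda>_. lborel)))"
  proof (intro nn_integral_cong)
    fix x
    have "(\<integral>\<^sup>+y. ennreal (Wt I x) * ennreal (std_normal_density y * (SS I x + y^2)^k) \<partial>lborel)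
       = ennreal (Wt I x) * ennreal (\<Sum>j\<le>k. real (k choose j) * (fact (2*j) / (2^j * fact j)) * SS I x^(k-j))"
      by (simp add: nn_integral_cmult binom_int SS_nonneg)
    also have "\<dots> = (\<Sum>j\<le>k. ennreal (real (k choose j) * (fact (2*j) / (2^j * fact j))) * ennreal (Wt I x * SS I x ^ (k-j)))"
      by (subst ennreal_mult[symmetric]) (auto simp: Wt_nonneg SS_nonneg sum_nonneg ennreal_mult[symmetric] sum_distrib_left mult_ac intro!: sum_ennreal[symmetric] sum.cong)
    finally show "(\<integral>\<^sup>+y. ennreal (Wt I x) * ennreal (std_normal_density y * (SS I x + y^2)^k) \<partial>lborel) = (\<Sum>j\<le>k. ennreal (real (k choose j) * (fact (2*j) / (2^j * fact j))) * ennreal (Wt I x * SS I x ^ (k-j)))" .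
  qed
  also have "\<dots> = (\<Sum>j\<le>k. ennreal (real (k choose j) * (fact (2*j) / (2^j * fact j))) * Qm I (k-j))"
    unfolding Qm_def Wt_def SS_def
    by (subst nn_integral_sum) (auto simp: nn_integral_cmult)
  finally show ?thesis .
qed

definition qf :: "real \<Rightarrow> nat \<Rightarrow> real" where
  "qf n j = (if j = 0 then 1 else if j = 1 then n else if j = 2 then n * (n + 2) else n * (n + 2) * (n + 4))"

lemma qf_nonneg: "n \<ge> 0 \<Longrightarrow> qf n j \<ge> 0" unfolding qf_def by auto

lemma qf_rec:
  assumes "k \<le> 3"
  shows "(\<Sum>j\<le>k. real (k choose j) * (fact (2*j) / (2^j * fact j)) * qf n (k-j)) = qf (n+1) k"
proof -
  have f4: "fact 4 = (24::real)" and f6: "fact 6 = (720::real)" by (simp_all add: fact_numeral)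
  have "k = 0 \<or> k = 1 \<or> k = 2 \<or> k = 3" using assms by auto
  then show ?thesis
  proof (elim disjE)
    assume "k = 0" then show ?thesis by (simp add: qf_def)
  next
    assume "k = 1"
    have s1: "{..1::nat} = {0,1}" by auto
    show ?thesis unfolding \<open>k = 1\<close> s1 by (simp add: qf_def)
  next
    assume "k = 2"
    have s1: "{..2::nat} = {0,1,2}" by auto
    show ?thesis unfolding \<open>k = 2\<close> s1 by (simp add: qf_def f4 algebra_simps)
  next
    assume "k = 3"
    have s1: "{..3::nat} = {0,1,2,3}" by auto
    have b: "(3 choose 2) = 3" by (simp add: numeral_eq_Suc)
    show ?thesis unfolding \<open>k = 3\<close> s1 by (simp add: qf_def f4 f6 b algebra_simps fact_numeral)
  qed
qed

lemma Qm_vals: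
  assumes "finite I"
  shows "\<forall>k\<le>3. Qm I k = ennreal (qf (real (card I)) k)"
  using assms
proof (induction I rule: finite_induct)
  case empty
  then show ?case by (auto simp: Qm_empty qf_def)
next
  case (insert i I)
  let ?n = "real (card I)"
  have c: "real (card (insert i I)) = ?n + 1" using insert by simp
  show ?case
  proof (intro allI impI)
    fix k :: nat assume k: "k \<le> 3"
    have "Qm (insert i I) k = (\<Sum>j\<le>k. ennreal (real (k choose j) * (fact (2*j) / (2^j * fact j))) * ennreal (qf ?n (k-j)))"
      unfolding Qm_insert[OF insert(1,2)] using insert(3) k by (intro sum.cong) auto
    also have "\<dots> = ennreal (\<Sum>j\<le>k. real (k choose j) * (fact (2*j) / (2^j * fact j)) * qf ?n (k-j))"
      by (subst sum_ennreal[symmetric]) (auto simp: qf_nonneg ennreal_mult[symmetric] intro!: sum.cong)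
    also have "\<dots> = ennreal (qf (real (card (insert i I))) k)" unfolding c qf_rec[OF k] ..
    finally show "Qm (insert i I) k = ennreal (qf (real (card (insert i I))) k)" .
  qed
qed

lemma sets_std_gaussian[simp, measurable_cong]: "sets std_gaussian = sets borel"
  by (simp add: std_gaussian_def)

lemma gauss_moment:
  "(\<integral>\<^sup>+u. ennreal ((norm u ^ 2) ^ k) \<partial>(std_gaussian::'a::euclidean_space measure)) = Qm (Basis::'a set) k"
proof -
  have "(\<integral>\<^sup>+u. ennreal ((norm u ^ 2) ^ k) \<partial>(std_gaussian::'a measure))
     = (\<integral>\<^sup>+u. ennreal ((\<Prod>b\<in>Basis. std_normal_density (u \<bullet> b)) * (norm u ^ 2) ^ k) \<partial>(lborel::'a measure))"
    unfolding std_gaussian_def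
    by (subst nn_integral_density) (auto intro!: nn_integral_cong simp: ennreal_mult' prod_nonneg normal_density_nonneg)
  also have "\<dots> = (\<integral>\<^sup>+x. ennreal ((\<Prod>b\<in>Basis. std_normal_density ((\<Sum>c\<in>Basis. x c *\<^sub>R c) \<bullet> b)) * (norm (\<Sum>c\<in>Basis. x c *\<^sub>R c) ^ 2) ^ k) \<partial>(PiM (Basis::'a set) (\<lambda>_. lborel)))"
    by (subst lborel_eq) (simp add: nn_integral_distr)
  also have "\<dots> = Qm (Basis::'a set) k"
    unfolding Qm_def Wt_def SS_def
  proof (intro nn_integral_cong)
    fix x :: "'a \<Rightarrow> real"
    have "norm (\<Sum>c\<in>Basis. x c *\<^sub>R c) ^ 2 = (\<Sum>b\<in>(Basis::'a set). (x b)^2)"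
      by (subst power2_norm_eq_inner, subst euclidean_inner) (simp add: power2_eq_square)
    then show "ennreal ((\<Prod>b\<in>Basis. std_normal_density ((\<Sum>c\<in>Basis. x c *\<^sub>R c) \<bullet> b)) * (norm (\<Sum>c\<in>Basis. x c *\<^sub>R c) ^ 2) ^ k)
       = ennreal ((\<Prod>b\<in>(Basis::'a set). std_normal_density (x b)) * (\<Sum>b\<in>(Basis::'a set). (x b)^2) ^ k)"
      by simp
  qed
  finally show ?thesis .
qed

lemma gauss_moments:
  "(\<integral>\<^sup>+u. ennreal ((norm u ^ 2) ^ k) \<partial>(std_gaussian::'a::euclidean_space measure)) = ennreal (qf (real DIM('a)) k)"
  if "k \<le> 3"
  using Qm_vals[of "Basis::'a set"] that by (simp add: gauss_moment)

lemma prob_space_std_gaussian: "prob_space (std_gaussian::'a::euclidean_space measure)"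
proof
  have "emeasure (std_gaussian::'a measure) (space std_gaussian) = (\<integral>\<^sup>+u. ennreal ((norm u ^ 2) ^ 0) \<partial>(std_gaussian::'a measure))"
    by simp
  then show "emeasure (std_gaussian::'a measure) (space std_gaussian) = 1"
    using gauss_moments[of 0, where 'a='a] by (simp add: qf_def)
qed



lemma taylor_bound:
  fixes f :: "'a::euclidean_space \<Rightarrow> real" and grad :: "'a \<Rightarrow> 'a"
  assumes deriv: "\<And>y. (f has_derivative (\<lambda>h. grad y \<bullet> h)) (at y)"
    and lip1: "\<And>y z. norm (grad y - grad z) \<le> L1 * norm (y - z)"
  shows "\<bar>f (x + h) - f x - grad x \<bullet> h\<bar> \<le> L1 / 2 * norm h ^ 2"
proof -
  have dphi: "((\<lambda>t. f (x + t *\<^sub>R h)) has_real_derivative (grad (x + t *\<^sub>R h) \<bullet> h)) (at t)" for t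
  proof -
    have "((\<lambda>t. x + t *\<^sub>R h) has_derivative (\<lambda>s. s *\<^sub>R h)) (at t)"
      by (auto intro!: derivative_eq_intros)
    from has_derivative_compose[OF this deriv]
    have "((\<lambda>t. f (x + t *\<^sub>R h)) has_derivative (\<lambda>s. grad (x + t *\<^sub>R h) \<bullet> (s *\<^sub>R h))) (at t)" .
    moreover have "(\<lambda>s. grad (x + t *\<^sub>R h) \<bullet> (s *\<^sub>R h)) = (\<lambda>s. s * (grad (x + t *\<^sub>R h) \<bullet> h))"
      by auto
    moreover have "(\<lambda>s. s * (grad (x + t *\<^sub>R h) \<bullet> h)) = (*) (grad (x + t *\<^sub>R h) \<bullet> h)"
      by (auto simp: mult.commute)
    ultimately show ?thesis
      by (simp add: has_field_derivative_def)
  qed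
  have gb: "\<bar>grad (x + t *\<^sub>R h) \<bullet> h - grad x \<bullet> h\<bar> \<le> L1 * t * norm h ^ 2" if "t \<ge> 0" for t
  proof -
    have "\<bar>grad (x + t *\<^sub>R h) \<bullet> h - grad x \<bullet> h\<bar> = \<bar>(grad (x + t *\<^sub>R h) - grad x) \<bullet> h\<bar>"
      by (simp add: inner_diff_left)
    also have "\<dots> \<le> norm (grad (x + t *\<^sub>R h) - grad x) * norm h" by (rule Cauchy_Schwarz_ineq2)
    also have "\<dots> \<le> (L1 * norm (t *\<^sub>R h)) * norm h"
      using lip1[of "x + t *\<^sub>R h" x] by (intro mult_right_mono) auto
    finally show ?thesis using that by (simp add: power2_eq_square mult_ac)
  qed
  define g1 where "g1 t = f (x + t *\<^sub>R h) - f x - t * (grad x \<bullet> h) - L1 / 2 * t^2 * norm h ^ 2" for t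
  define g2 where "g2 t = f (x + t *\<^sub>R h) - f x - t * (grad x \<bullet> h) + L1 / 2 * t^2 * norm h ^ 2" for t
  have d1: "(g1 has_real_derivative (grad (x + t *\<^sub>R h) \<bullet> h - grad x \<bullet> h - L1 * t * norm h ^ 2)) (at t)" for t
    unfolding g1_def by (auto intro!: derivative_eq_intros dphi)
  have d2: "(g2 has_real_derivative (grad (x + t *\<^sub>R h) \<bullet> h - grad x \<bullet> h + L1 * t * norm h ^ 2)) (at t)" for t
    unfolding g2_def by (auto intro!: derivative_eq_intros dphi)
  have "g1 1 \<le> g1 0"
    by (rule DERIV_nonpos_imp_nonincreasing[of 0 1]) (use d1 gb in \<open>force\<close>)+
  moreover have "g2 0 \<le> g2 1"
    by (rule DERIV_nonneg_imp_nondecreasing[of 0 1]) (use d2 gb in \<open>force\<close>)+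
  ultimately show ?thesis unfolding g1_def g2_def by (simp add: abs_le_iff) (simp add: abs_if field_simps; linarith)
qed



locale noise =
  fixes N :: "real measure" and a b \<sigma>r :: real
  assumes N_prob: "prob_space N"
    and N_sets: "sets N = sets borel"
    and mean0: "integral\<^sup>L N (\<lambda>v. v) = 0"
    and var: "prob_space.variance N (\<lambda>v. v) = \<sigma>r\<^sup>2"
    and inv_bound: "integral\<^sup>L N (\<lambda>v. 1 / (1 + v)) \<le> b"
    and a_lt1: "a < 1"
    and support: "AE v in N. v \<in> {-a..a}"
begin

interpretation P: prob_space N by (rule N_prob)

lemma measN: "h \<in> borel_measurable borel \<Longrightarrow> h \<in> borel_measurable N"
  by (subst measurable_cong_sets[OF N_sets refl]) auto

lemma AE_pos: "AE v in N. 1 + v \<ge> 1 - a \<and> 1 - a > 0"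
  using support a_lt1 by (auto elim!: eventually_mono)

lemma int1: "integrable N (\<lambda>v. v)"
proof (rule P.integrable_const_bound[where B="\<bar>a\<bar>"])
  show "AE x in N. norm x \<le> \<bar>a\<bar>"
    by (rule eventually_mono[OF support]) auto
qed (auto intro: measN)

lemma int2: "integrable N (\<lambda>v. v^2)"
proof (rule P.integrable_const_bound[where B="a^2"])
  show "AE x in N. norm (x^2) \<le> a^2"
  proof (rule eventually_mono[OF support])
    fix x assume "x \<in> {-a..a}"
    then have "\<bar>x\<bar> \<le> \<bar>a\<bar>" by auto
    then have "\<bar>x\<bar>^2 \<le> \<bar>a\<bar>^2" by (rule power_mono) simp
    then show "norm (x^2) \<le> a^2" by simp
  qed
qed (auto intro: measN)

lemma int_inv: "integrable N (\<lambda>v. 1 / (1 + v))"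
proof (rule P.integrable_const_bound[where B="1 / (1 - a)"])
  show "AE x in N. norm (1 / (1 + x)) \<le> 1 / (1 - a)"
  proof (rule eventually_mono[OF AE_pos])
    fix x assume "1 + x \<ge> 1 - a \<and> 1 - a > 0"
    then show "norm (1 / (1 + x)) \<le> 1 / (1 - a)" by (auto intro!: frac_le)
  qed
qed (auto intro: measN)

lemma second: "integral\<^sup>L N (\<lambda>v. v^2) = \<sigma>r^2"
  using var mean0 by simp

lemma var_int:
  assumes "w \<ge> 0" "r \<ge> 0"
  shows "(\<integral>\<^sup>+v. ennreal (w * ((p + q * v)^2 + r)) \<partial>N) = ennreal (w * (p^2 + q^2 * \<sigma>r^2 + r))"
proof -
  have e: "(\<lambda>v. w * ((p + q * v)^2 + r)) = (\<lambda>v. w * (p^2 + r) + (2 * w * p * q) * v + (w * q^2) * v^2)"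
    by (simp add: power2_eq_square algebra_simps)
  have ii: "integrable N (\<lambda>v. w * ((p + q * v)^2 + r))"
    unfolding e using int1 int2 by simp
  have "(\<integral>\<^sup>+v. ennreal (w * ((p + q * v)^2 + r)) \<partial>N) = ennreal (integral\<^sup>L N (\<lambda>v. w * ((p + q * v)^2 + r)))"
    using assms ii by (intro nn_integral_eq_integral) auto
  also have "integral\<^sup>L N (\<lambda>v. w * ((p + q * v)^2 + r)) = w * (p^2 + r) + (2 * w * p * q) * 0 + (w * q^2) * \<sigma>r^2"
    unfolding e using int1 int2 P.prob_space by (simp add: mean0 second)
  finally show ?thesis by (simp add: algebra_simps)
qed

lemma mu_int:
  assumes "A \<ge> 0" "B \<ge> 0" "Cc \<ge> 0"
  shows "(\<integral>\<^sup>+v. ennreal (A * (1 + v) + B * (1 / (1 + v)) + Cc) \<partial>N) \<le> ennreal (A + B * b + Cc)"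
proof -
  have ii: "integrable N (\<lambda>v. A * (1 + v) + B * (1 / (1 + v)) + Cc)"
    by (intro Bochner_Integration.integrable_add integrable_mult_right int_inv int1 P.integrable_const)
  have ae: "AE v in N. 0 \<le> A * (1 + v) + B * (1 / (1 + v)) + Cc"
    by (rule eventually_mono[OF AE_pos]) (use assms in auto)
  have "(\<integral>\<^sup>+v. ennreal (A * (1 + v) + B * (1 / (1 + v)) + Cc) \<partial>N) = ennreal (integral\<^sup>L N (\<lambda>v. A * (1 + v) + B * (1 / (1 + v)) + Cc))"
    using ii ae by (rule nn_integral_eq_integral)
  also have "integral\<^sup>L N (\<lambda>v. A * (1 + v) + B * (1 / (1 + v)) + Cc) = A + B * integral\<^sup>L N (\<lambda>v. 1 / (1 + v)) + Cc"
  proof -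
    have i2: "integrable N (\<lambda>v. A * (1 + v))" "integrable N (\<lambda>v. B * (1 / (1 + v)))"
      by (intro Bochner_Integration.integrable_add integrable_mult_right int_inv int1 P.integrable_const)+
    have i3: "integrable N (\<lambda>v. A * (1 + v) + B * (1 / (1 + v)))" using i2 by simp
    have "integral\<^sup>L N (\<lambda>v. A * (1 + v) + B * (1 / (1 + v)) + Cc) = integral\<^sup>L N (\<lambda>v. A * (1 + v)) + integral\<^sup>L N (\<lambda>v. B * (1 / (1 + v))) + Cc"
      using i2 i3 P.prob_space by simp
    also have "integral\<^sup>L N (\<lambda>v. A * (1 + v)) = A"
      using int1 P.prob_space mean0 by simp
    also have "integral\<^sup>L N (\<lambda>v. B * (1 / (1 + v))) = B * integral\<^sup>L N (\<lambda>v. 1 / (1 + v))"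
      by (rule integral_mult_right_zero)
    finally show ?thesis .
  qed
  also have "\<dots> \<le> A + B * b + Cc" using inv_bound assms by (simp add: mult_left_mono)
  finally show ?thesis by (simp add: ennreal_leI)
qed

end


lemma pt_bound:
  fixes f :: "'a::euclidean_space \<Rightarrow> real" and g u x :: 'a
  assumes taylor: "\<And>h. \<bar>f (x + h) - f x - g \<bullet> h\<bar> \<le> L1 / 2 * norm h ^ 2"
    and lip0: "\<And>y z. \<bar>f y - f z\<bar> \<le> L0 * norm (y - z)"
    and C: "C > 0" and fx: "f x \<noteq> 0" and t: "t > 0" and sg: "s \<ge> 0"
    and mu: "\<mu> = C * sqrt \<bar>f x * t\<bar>"
  shows "norm u ^ 2 * (((f (x + \<mu> *\<^sub>R u) - f x) / \<mu> - g \<bullet> u)^2 + (f x / \<mu>)^2 * s + (f (x + \<mu> *\<^sub>R u) / \<mu>)^2 * s)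
     \<le> (L1^2 * C^2 * \<bar>f x\<bar> / 4 * (norm u ^ 2)^3) * t + (3 * s * \<bar>f x\<bar> / C^2 * norm u ^ 2) * (1 / t) + 2 * s * L0^2 * (norm u ^ 2)^2"
proof -
  define U where "U = norm u ^ 2"
  have U0: "U \<ge> 0" unfolding U_def by simp
  have ft: "\<bar>f x * t\<bar> > 0" using fx t by simp
  have mpos: "\<mu> > 0" unfolding mu using C ft by simp
  have m2: "\<mu>^2 = C^2 * \<bar>f x\<bar> * t" unfolding mu using ft t by (simp add: power_mult_distrib abs_mult)
  define P where "P = (f (x + \<mu> *\<^sub>R u) - f x) / \<mu> - g \<bullet> u"
  have "P = (f (x + \<mu> *\<^sub>R u) - f x - g \<bullet> (\<mu> *\<^sub>R u)) / \<mu>"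
    unfolding P_def using mpos by (simp add: field_simps)
  then have "\<bar>P\<bar> = \<bar>f (x + \<mu> *\<^sub>R u) - f x - g \<bullet> (\<mu> *\<^sub>R u)\<bar> / \<mu>"
    using mpos by (simp add: abs_div)
  also have "\<dots> \<le> (L1 / 2 * norm (\<mu> *\<^sub>R u) ^ 2) / \<mu>"
    using taylor[of "\<mu> *\<^sub>R u"] mpos by (intro divide_right_mono) auto
  also have "\<dots> = L1 / 2 * \<mu> * U" unfolding U_def using mpos by (simp add: power2_eq_square)
  finally have Pb: "\<bar>P\<bar> \<le> L1 / 2 * \<mu> * U" .
  have P2: "P^2 \<le> (L1 / 2 * \<mu> * U)^2"
    using power_mono[OF Pb abs_ge_zero, of 2] by simp
  have t1: "U * P^2 \<le> (L1^2 * C^2 * \<bar>f x\<bar> / 4 * U^3) * t"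
  proof -
    have "U * P^2 \<le> U * (L1 / 2 * \<mu> * U)^2" using P2 U0 by (rule mult_left_mono)
    also have "\<dots> = (L1^2 * \<mu>^2 / 4) * U^3" by (simp add: power2_eq_square power3_eq_cube)
    also have "\<dots> = (L1^2 * C^2 * \<bar>f x\<bar> / 4 * U^3) * t" unfolding m2 by simp
    finally show ?thesis .
  qed
  define D where "D = f (x + \<mu> *\<^sub>R u) - f x"
  have Db: "\<bar>D\<bar> \<le> L0 * (\<mu> * norm u)" unfolding D_def using lip0[of "x + \<mu> *\<^sub>R u" x] mpos by simp
  have D2: "D^2 \<le> L0^2 * \<mu>^2 * U"
    using power_mono[OF Db abs_ge_zero, of 2] unfolding U_def by (simp add: power_mult_distrib)
  have fsq: "(f (x + \<mu> *\<^sub>R u))^2 \<le> 2 * (f x)^2 + 2 * D^2"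
  proof -
    have "f (x + \<mu> *\<^sub>R u) = f x + D" unfolding D_def by simp
    moreover have "(f x + D)^2 \<le> 2 * (f x)^2 + 2 * D^2" using sum_squares_ge_zero[of "f x - D" 0]
      by (simp add: power2_eq_square algebra_simps)
    ultimately show ?thesis by simp
  qed
  have t2: "U * ((f x / \<mu>)^2 * s + (f (x + \<mu> *\<^sub>R u) / \<mu>)^2 * s) \<le> (3 * s * \<bar>f x\<bar> / C^2 * U) * (1 / t) + 2 * s * L0^2 * U^2"
  proof -
    have "(f x / \<mu>)^2 + (f (x + \<mu> *\<^sub>R u) / \<mu>)^2 = ((f x)^2 + (f (x + \<mu> *\<^sub>R u))^2) / \<mu>^2"
      by (simp add: power_divide add_divide_distrib)
    also have "\<dots> \<le> (3 * (f x)^2 + 2 * (L0^2 * \<mu>^2 * U)) / \<mu>^2"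
      using fsq D2 mpos by (intro divide_right_mono) auto
    also have "\<dots> = 3 * (f x)^2 / \<mu>^2 + 2 * L0^2 * U" using mpos by (simp add: field_simps)
    also have "3 * (f x)^2 / \<mu>^2 = 3 * \<bar>f x\<bar> / C^2 * (1 / t)"
    proof -
      have "(f x)^2 = \<bar>f x\<bar> * \<bar>f x\<bar>" by (simp add: power2_eq_square)
      then show ?thesis unfolding m2 using C fx t by (simp add: field_simps)
    qed
    finally have "(f x / \<mu>)^2 + (f (x + \<mu> *\<^sub>R u) / \<mu>)^2 \<le> 3 * \<bar>f x\<bar> / C^2 * (1 / t) + 2 * L0^2 * U" .
    then have "U * s * ((f x / \<mu>)^2 + (f (x + \<mu> *\<^sub>R u) / \<mu>)^2) \<le> U * s * (3 * \<bar>f x\<bar> / C^2 * (1 / t) + 2 * L0^2 * U)"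
      using U0 sg by (intro mult_left_mono) auto
    then show ?thesis by (simp add: algebra_simps power2_eq_square)
  qed
  show ?thesis using t1 t2 unfolding U_def[symmetric] P_def[symmetric] by (simp add: algebra_simps)
qed



lemma final_arith:
  fixes n r s C \<sigma> L1 L0 F b :: real
  assumes n: "n = r^2" and r: "r > 0" and s: "s > 0" and ns: "n * (n + 2) * (n + 4) \<le> s^2"
    and C2: "C^2 = 4 * \<sigma> * r / (L1 * s)" and sg: "\<sigma> > 0" and L1: "L1 > 0" and b: "b \<ge> 0" and F: "F \<ge> 0"
  shows "L1^2 * C^2 * F / 4 * (n * (n + 2) * (n + 4)) + 3 * \<sigma>^2 * F / C^2 * b * n + 2 * \<sigma>^2 * L0^2 * (n * (n + 2))
     \<le> (1 + b) * L1 * \<sigma> * (r * s) * F + 3 * L0^2 * \<sigma>^2 * (n + 4)^2"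
proof -
  have t1: "L1^2 * C^2 * F / 4 * (n * (n + 2) * (n + 4)) = L1 * \<sigma> * r * F * (n * (n + 2) * (n + 4)) / s"
    unfolding C2 using L1 s by (simp add: field_simps power2_eq_square)
  also have "\<dots> \<le> L1 * \<sigma> * r * F * s^2 / s"
    using ns L1 sg r F s by (intro divide_right_mono mult_left_mono) auto
  also have "\<dots> = L1 * \<sigma> * (r * s) * F" using s by (simp add: power2_eq_square)
  finally have T1: "L1^2 * C^2 * F / 4 * (n * (n + 2) * (n + 4)) \<le> L1 * \<sigma> * (r * s) * F" .
  have T2: "3 * \<sigma>^2 * F / C^2 * b * n = 3 / 4 * (b * L1 * \<sigma> * (r * s) * F)"
    unfolding C2 n using L1 s r sg by (simp add: field_simps power2_eq_square)
  have T2': "3 / 4 * (b * L1 * \<sigma> * (r * s) * F) \<le> b * L1 * \<sigma> * (r * s) * F"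
    using b L1 sg r s F by simp
  have T3: "2 * \<sigma>^2 * L0^2 * (n * (n + 2)) \<le> 3 * L0^2 * \<sigma>^2 * (n + 4)^2"
  proof -
    have n0: "n \<ge> 0" using n by simp
    have "3*(n+4)^2 - 2*(n*(n+2)) = n*n + 20*n + 48" by (simp add: power2_eq_square algebra_simps)
    moreover have "n * n \<ge> 0" using n0 by simp
    ultimately have "2 * (n * (n + 2)) \<le> 3 * (n + 4)^2" using n0 by linarith
    then have "(\<sigma>^2 * L0^2) * (2 * (n * (n + 2))) \<le> (\<sigma>^2 * L0^2) * (3 * (n + 4)^2)" by (intro mult_left_mono) auto
    then show ?thesis by (simp add: algebra_simps)
  qed
  have e: "(1 + b) * L1 * \<sigma> * (r * s) * F = L1 * \<sigma> * (r * s) * F + b * L1 * \<sigma> * (r * s) * F"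
    by (simp add: algebra_simps)
  have T22: "3 * \<sigma>^2 * F / C^2 * b * n \<le> b * L1 * \<sigma> * (r * s) * F" unfolding T2 using T2' .
  have "L1^2 * C^2 * F / 4 * (n * (n + 2) * (n + 4)) + 3 * \<sigma>^2 * F / C^2 * b * n + 2 * \<sigma>^2 * L0^2 * (n * (n + 2))
     \<le> L1 * \<sigma> * (r * s) * F + b * L1 * \<sigma> * (r * s) * F + 3 * L0^2 * \<sigma>^2 * (n + 4)^2"
    by (intro add_mono T1 T22 T3)
  then show ?thesis unfolding e .
qed



lemma ennreal_comb:
  fixes a b c x y z :: real
  assumes "a \<ge> 0" "b \<ge> 0" "c \<ge> 0" "x \<ge> 0" "y \<ge> 0" "z \<ge> 0"
  shows "ennreal a * ennreal x + ennreal b * ennreal y + ennreal c * ennreal z = ennreal (a*x + b*y + c*z)"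
  using assms by (simp add: ennreal_mult ennreal_plus add_nonneg_nonneg mult_nonneg_nonneg)

theorem lemma3:
  fixes f :: "'a::euclidean_space \<Rightarrow> real"
    and grad :: "'a \<Rightarrow> 'a"
    and N :: "real measure"
    and L0 L1 a b \<sigma>r :: real
    and x :: 'a
  assumes conv: "convex_on UNIV f"
    and deriv: "\<And>y. (f has_derivative (\<lambda>h. grad y \<bullet> h)) (at y)"
    and grad_cont: "continuous_on UNIV grad"
    and lip0: "\<And>y z. \<bar>f y - f z\<bar> \<le> L0 * norm (y - z)"
    and lip1: "\<And>y z. norm (grad y - grad z) \<le> L1 * norm (y - z)"
    and L1_pos: "L1 > 0"
    and N_prob: "prob_space N"
    and N_sets: "sets N = sets borel"
    and mean0: "integral\<^sup>L N (\<lambda>v. v) = 0"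
    and var: "prob_space.variance N (\<lambda>v. v) = \<sigma>r\<^sup>2"
    and \<sigma>r_pos: "\<sigma>r > 0"
    and inv_bound: "integral\<^sup>L N (\<lambda>v. 1 / (1 + v)) \<le> b"
    and a_lt1: "a < 1"
    and support: "AE v in N. v \<in> {-a..a}"
    and fx: "f x \<noteq> 0"
  shows "(\<integral>\<^sup>+ (u, \<nu>1, \<nu>2, \<nu>3). ennreal
            (let n = real DIM('a);
                 C4 = (16 * \<sigma>r\<^sup>2 * n / (L1\<^sup>2 * (1 + 3 * \<sigma>r\<^sup>2) * (n + 6) ^ 3)) powr (1/4);
                 \<mu> = C4 * sqrt \<bar>f x * (1 + \<nu>3)\<bar>
             in (norm (((f (x + \<mu> *\<^sub>R u) * (1 + \<nu>1) - f x * (1 + \<nu>2)) / \<mu>) *\<^sub>R u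
                        - (grad x \<bullet> u) *\<^sub>R u))\<^sup>2)
          \<partial>(std_gaussian \<Otimes>\<^sub>M (N \<Otimes>\<^sub>M (N \<Otimes>\<^sub>M N))))
       \<le> ennreal ((1 + b) * L1 * \<sigma>r * sqrt ((1 + 3 * \<sigma>r\<^sup>2) * real DIM('a) * (real DIM('a) + 6) ^ 3) * \<bar>f x\<bar>
                  + 3 * L0\<^sup>2 * \<sigma>r\<^sup>2 * (real DIM('a) + 4)\<^sup>2)"
proof -
  interpret Nz: noise N a b \<sigma>r
    unfolding noise_def using N_prob N_sets mean0 var inv_bound a_lt1 support by blast
  interpret P: prob_space N by (rule N_prob)
  have sfN: "sigma_finite_measure N" by (rule prob_space_imp_sigma_finite[OF N_prob])
  have pNN: "prob_space (N \<Otimes>\<^sub>M N)" by (rule prob_space_pair[OF N_prob N_prob])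
  have pN3: "prob_space (N \<Otimes>\<^sub>M (N \<Otimes>\<^sub>M N))" by (rule prob_space_pair[OF N_prob pNN])
  interpret NN: pair_sigma_finite N N by (intro pair_sigma_finite.intro sfN)
  interpret N3: pair_sigma_finite N "N \<Otimes>\<^sub>M N"
    by (intro pair_sigma_finite.intro sfN prob_space_imp_sigma_finite[OF pNN])
  interpret M3: sigma_finite_measure "N \<Otimes>\<^sub>M (N \<Otimes>\<^sub>M N)" by (rule prob_space_imp_sigma_finite[OF pN3])
  interpret G: prob_space "std_gaussian :: 'a measure" by (rule prob_space_std_gaussian)

  have fcont: "continuous_on UNIV f"
    using deriv by (meson has_derivative_continuous continuous_at_imp_continuous_on)
  have fm[measurable]: "f \<in> borel_measurable borel"
    by (rule borel_measurable_continuous_onI[OF fcont])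

  define n where "n = real DIM('a)"
  define C where "C = (16 * \<sigma>r\<^sup>2 * n / (L1\<^sup>2 * (1 + 3 * \<sigma>r\<^sup>2) * (n + 6) ^ 3)) powr (1/4)"
  define mu where "mu v = C * sqrt \<bar>f x * (1 + v)\<bar>" for v
  define E where "E u v1 v2 v3 = ((f (x + mu v3 *\<^sub>R u) * (1 + v1) - f x * (1 + v2)) / mu v3 - grad x \<bullet> u)^2 * norm u ^ 2" for u v1 v2 v3
  define \<alpha> where "\<alpha> = L1^2 * C^2 * \<bar>f x\<bar> / 4"
  define \<beta> where "\<beta> = 3 * \<sigma>r^2 * \<bar>f x\<bar> / C^2"
  define \<gamma> where "\<gamma> = 2 * \<sigma>r^2 * L0^2"

  have n1: "n \<ge> 1" unfolding n_def by (simp add: DIM_positive Suc_le_eq)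
  have Dpos: "16 * \<sigma>r\<^sup>2 * n / (L1\<^sup>2 * (1 + 3 * \<sigma>r\<^sup>2) * (n + 6) ^ 3) > 0"
    using n1 \<sigma>r_pos L1_pos by (intro divide_pos_pos mult_pos_pos) (auto intro: add_pos_nonneg)
  have Cpos: "C > 0" unfolding C_def powr_gt_zero using Dpos by linarith
  have b0: "b \<ge> 0"
  proof -
    have "0 \<le> integral\<^sup>L N (\<lambda>v. 1 / (1 + v))"
      by (rule integral_nonneg_AE, rule eventually_mono[OF Nz.AE_pos]) auto
    then show ?thesis using inv_bound by linarith
  qed
  have \<alpha>0: "\<alpha> \<ge> 0" and \<beta>0: "\<beta> \<ge> 0" and \<gamma>0: "\<gamma> \<ge> 0" unfolding \<alpha>_def \<beta>_def \<gamma>_def by auto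

  have taylor: "\<And>h. \<bar>f (x + h) - f x - grad x \<bullet> h\<bar> \<le> L1 / 2 * norm h ^ 2"
    by (rule taylor_bound[OF deriv lip1])

  have inner: "(\<integral>\<^sup>+ (v1, v2, v3). ennreal (E u v1 v2 v3) \<partial>(N \<Otimes>\<^sub>M (N \<Otimes>\<^sub>M N)))
      \<le> ennreal (\<alpha> * (norm u ^ 2)^3 + \<beta> * b * (norm u ^ 2) ^ 1 + \<gamma> * (norm u ^ 2)^2)" for u
  proof -
    define U where "U = norm u ^ 2"
    have U0: "U \<ge> 0" unfolding U_def by simp
    define A where "A v3 = f (x + mu v3 *\<^sub>R u)" for v3
    define Pp where "Pp v3 = (A v3 - f x) / mu v3 - grad x \<bullet> u" for v3
    define c1 where "c1 v3 = A v3 / mu v3" for v3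
    define c2 where "c2 v3 = f x / mu v3" for v3
    have Eform: "E u v1 v2 v3 = U * (((Pp v3 - c2 v3 * v2) + c1 v3 * v1)^2 + 0)" for v1 v2 v3
    proof -
      have "(f (x + mu v3 *\<^sub>R u) * (1 + v1) - f x * (1 + v2)) / mu v3 - grad x \<bullet> u = (Pp v3 - c2 v3 * v2) + c1 v3 * v1"
        unfolding Pp_def c1_def c2_def A_def by (simp add: divide_inverse algebra_simps)
      then show ?thesis unfolding E_def U_def by (simp add: mult.commute)
    qed
    have sN3: "sets (N \<Otimes>\<^sub>M (N \<Otimes>\<^sub>M N)) = sets ((borel::real measure) \<Otimes>\<^sub>M (borel \<Otimes>\<^sub>M borel))"
      by (intro sets_pair_measure_cong) (auto simp: N_sets)
    have sN2: "sets (N \<Otimes>\<^sub>M N) = sets ((borel::real measure) \<Otimes>\<^sub>M borel)"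
      by (intro sets_pair_measure_cong) (auto simp: N_sets)
    have m3: "(\<lambda>(v1, v2, v3). ennreal (E u v1 v2 v3)) \<in> borel_measurable (N \<Otimes>\<^sub>M (N \<Otimes>\<^sub>M N))"
      unfolding measurable_cong_sets[OF sN3 refl] E_def mu_def by measurable
    have m2: "(\<lambda>y. ennreal (U * ((Pp (snd y) + (- c2 (snd y)) * fst y)^2 + (c1 (snd y))^2 * \<sigma>r^2))) \<in> borel_measurable (N \<Otimes>\<^sub>M N)"
      unfolding measurable_cong_sets[OF sN2 refl] Pp_def c1_def c2_def A_def mu_def by measurable
    have "(\<integral>\<^sup>+ (v1, v2, v3). ennreal (E u v1 v2 v3) \<partial>(N \<Otimes>\<^sub>M (N \<Otimes>\<^sub>M N)))
        = (\<integral>\<^sup>+ y. (\<integral>\<^sup>+ v1. ennreal (E u v1 (fst y) (snd y)) \<partial>N) \<partial>(N \<Otimes>\<^sub>M N))"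
      using N3.nn_integral_snd[OF m3] by (simp add: case_prod_beta)
    also have "\<dots> = (\<integral>\<^sup>+ y. ennreal (U * ((Pp (snd y) + (- c2 (snd y)) * fst y)^2 + (c1 (snd y))^2 * \<sigma>r^2)) \<partial>(N \<Otimes>\<^sub>M N))"
    proof (intro nn_integral_cong)
      fix y :: "real \<times> real"
      show "(\<integral>\<^sup>+ v1. ennreal (E u v1 (fst y) (snd y)) \<partial>N) = ennreal (U * ((Pp (snd y) + (- c2 (snd y)) * fst y)^2 + (c1 (snd y))^2 * \<sigma>r^2))"
        unfolding Eform by (subst Nz.var_int[OF U0 order_refl]) (simp add: algebra_simps)
    qed
    also have "\<dots> = (\<integral>\<^sup>+ v3. (\<integral>\<^sup>+ v2. ennreal (U * ((Pp v3 + (- c2 v3) * v2)^2 + (c1 v3)^2 * \<sigma>r^2)) \<partial>N) \<partial>N)"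
      using NN.nn_integral_snd[OF m2] by simp
    also have "\<dots> = (\<integral>\<^sup>+ v3. ennreal (U * ((Pp v3)^2 + (- c2 v3)^2 * \<sigma>r^2 + (c1 v3)^2 * \<sigma>r^2)) \<partial>N)"
      by (intro nn_integral_cong Nz.var_int U0) simp
    also have "\<dots> \<le> (\<integral>\<^sup>+ v3. ennreal ((\<alpha> * U^3) * (1 + v3) + (\<beta> * U) * (1 / (1 + v3)) + \<gamma> * U^2) \<partial>N)"
    proof (rule nn_integral_mono_AE, rule eventually_mono[OF Nz.AE_pos], intro ennreal_leI)
      fix v3 assume v3: "1 + v3 \<ge> 1 - a \<and> 1 - a > 0"
      have "U * ((Pp v3)^2 + (- c2 v3)^2 * \<sigma>r^2 + (c1 v3)^2 * \<sigma>r^2)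
          = norm u ^ 2 * (((f (x + mu v3 *\<^sub>R u) - f x) / mu v3 - grad x \<bullet> u)^2 + (f x / mu v3)^2 * \<sigma>r^2 + (f (x + mu v3 *\<^sub>R u) / mu v3)^2 * \<sigma>r^2)"
        unfolding U_def Pp_def c1_def c2_def A_def by simp
      also have "\<dots> \<le> (L1^2 * C^2 * \<bar>f x\<bar> / 4 * (norm u ^ 2)^3) * (1 + v3) + (3 * \<sigma>r^2 * \<bar>f x\<bar> / C^2 * norm u ^ 2) * (1 / (1 + v3)) + 2 * \<sigma>r^2 * L0^2 * (norm u ^ 2)^2"
        by (rule pt_bound[OF taylor lip0 Cpos fx]) (use v3 in \<open>auto simp: mu_def\<close>)
      also have "\<dots> = (\<alpha> * U^3) * (1 + v3) + (\<beta> * U) * (1 / (1 + v3)) + \<gamma> * U^2"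
        unfolding \<alpha>_def \<beta>_def \<gamma>_def U_def by simp
      finally show "U * ((Pp v3)^2 + (- c2 v3)^2 * \<sigma>r^2 + (c1 v3)^2 * \<sigma>r^2) \<le> (\<alpha> * U^3) * (1 + v3) + (\<beta> * U) * (1 / (1 + v3)) + \<gamma> * U^2" .
    qed
    also have "\<dots> \<le> ennreal (\<alpha> * U^3 + \<beta> * U * b + \<gamma> * U^2)"
      by (rule Nz.mu_int) (use \<alpha>0 \<beta>0 \<gamma>0 U0 in auto)
    also have "\<dots> = ennreal (\<alpha> * (norm u ^ 2)^3 + \<beta> * b * (norm u ^ 2) ^ 1 + \<gamma> * (norm u ^ 2)^2)"
      unfolding U_def by (simp add: mult_ac)
    finally show ?thesis .
  qed

  have meas: "(\<lambda>(u, v1, v2, v3). ennreal (E u v1 v2 v3)) \<in> borel_measurable ((std_gaussian::'a measure) \<Otimes>\<^sub>M (N \<Otimes>\<^sub>M (N \<Otimes>\<^sub>M N)))"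
  proof -
    have s: "sets ((std_gaussian::'a measure) \<Otimes>\<^sub>M (N \<Otimes>\<^sub>M (N \<Otimes>\<^sub>M N))) = sets ((borel::'a measure) \<Otimes>\<^sub>M ((borel::real measure) \<Otimes>\<^sub>M (borel \<Otimes>\<^sub>M borel)))"
      by (intro sets_pair_measure_cong) (auto simp: std_gaussian_def N_sets)
    show ?thesis unfolding measurable_cong_sets[OF s refl] E_def mu_def by measurable
  qed

  have "(\<integral>\<^sup>+ (u, v1, v2, v3). ennreal (E u v1 v2 v3) \<partial>((std_gaussian::'a measure) \<Otimes>\<^sub>M (N \<Otimes>\<^sub>M (N \<Otimes>\<^sub>M N))))
     = (\<integral>\<^sup>+ u. (\<integral>\<^sup>+ (v1, v2, v3). ennreal (E u v1 v2 v3) \<partial>(N \<Otimes>\<^sub>M (N \<Otimes>\<^sub>M N))) \<partial>(std_gaussian::'a measure))"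
    using sigma_finite_measure.nn_integral_fst[OF prob_space_imp_sigma_finite[OF pN3] meas] by simp
  also have "\<dots> \<le> (\<integral>\<^sup>+ u. ennreal (\<alpha> * (norm u ^ 2)^3 + \<beta> * b * (norm u ^ 2) ^ 1 + \<gamma> * (norm u ^ 2)^2) \<partial>(std_gaussian::'a measure))"
    by (rule nn_integral_mono) (rule inner)
  also have "\<dots> = ennreal (\<alpha> * qf n 3 + \<beta> * b * qf n 1 + \<gamma> * qf n 2)"
  proof -
    have "(\<integral>\<^sup>+ u. ennreal (\<alpha> * (norm u ^ 2)^3 + \<beta> * b * (norm u ^ 2) ^ 1 + \<gamma> * (norm u ^ 2)^2) \<partial>(std_gaussian::'a measure))
       = (\<integral>\<^sup>+ u. ennreal \<alpha> * ennreal ((norm u ^ 2)^3) + ennreal (\<beta> * b) * ennreal ((norm u ^ 2) ^ 1) + ennreal \<gamma> * ennreal ((norm u ^ 2)^2) \<partial>(std_gaussian::'a measure))"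
      using \<alpha>0 \<beta>0 \<gamma>0 b0 by (intro nn_integral_cong) (simp add: ennreal_mult[symmetric] ennreal_plus[symmetric] del: ennreal_plus)
    also have "\<dots> = (\<integral>\<^sup>+ u. ennreal \<alpha> * ennreal ((norm u ^ 2)^3) + ennreal (\<beta> * b) * ennreal ((norm u ^ 2) ^ 1) \<partial>(std_gaussian::'a measure))
        + (\<integral>\<^sup>+ u. ennreal \<gamma> * ennreal ((norm u ^ 2)^2) \<partial>(std_gaussian::'a measure))"
      by (rule nn_integral_add; measurable)
    finally have calc: "(\<integral>\<^sup>+ u. ennreal (\<alpha> * (norm u ^ 2)^3 + \<beta> * b * (norm u ^ 2) ^ 1 + \<gamma> * (norm u ^ 2)^2) \<partial>(std_gaussian::'a measure)) = (\<integral>\<^sup>+ u. ennreal \<alpha> * ennreal ((norm u ^ 2)^3) + ennreal (\<beta> * b) * ennreal ((norm u ^ 2) ^ 1) \<partial>(std_gaussian::'a measure))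
        + (\<integral>\<^sup>+ u. ennreal \<gamma> * ennreal ((norm u ^ 2)^2) \<partial>(std_gaussian::'a measure))" .
    have sp: "(\<integral>\<^sup>+ u. ennreal \<alpha> * ennreal ((norm u ^ 2)^3) + ennreal (\<beta> * b) * ennreal ((norm u ^ 2) ^ 1) \<partial>(std_gaussian::'a measure))
        = (\<integral>\<^sup>+ u. ennreal \<alpha> * ennreal ((norm u ^ 2)^3) \<partial>(std_gaussian::'a measure)) + (\<integral>\<^sup>+ u. ennreal (\<beta> * b) * ennreal ((norm u ^ 2) ^ 1) \<partial>(std_gaussian::'a measure))"
      by (rule nn_integral_add; measurable)
    have I3: "(\<integral>\<^sup>+ u. ennreal \<alpha> * ennreal ((norm u ^ 2)^3) \<partial>(std_gaussian::'a measure)) = ennreal \<alpha> * ennreal (qf n 3)"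
      unfolding n_def by (subst nn_integral_cmult) (measurable, simp only: gauss_moments[of 3] order_refl numeral_le_iff semiring_norm)
    have I1: "(\<integral>\<^sup>+ u. ennreal (\<beta> * b) * ennreal ((norm u ^ 2)^1) \<partial>(std_gaussian::'a measure)) = ennreal (\<beta> * b) * ennreal (qf n 1)"
      unfolding n_def by (subst nn_integral_cmult) (measurable, subst gauss_moments, simp_all)
    have I2: "(\<integral>\<^sup>+ u. ennreal \<gamma> * ennreal ((norm u ^ 2)^2) \<partial>(std_gaussian::'a measure)) = ennreal \<gamma> * ennreal (qf n 2)"
      unfolding n_def by (subst nn_integral_cmult) (measurable, subst gauss_moments, simp_all)
    have "ennreal \<alpha> * ennreal (qf n 3) + ennreal (\<beta> * b) * ennreal (qf n 1) + ennreal \<gamma> * ennreal (qf n 2) = ennreal (\<alpha> * qf n 3 + \<beta> * b * qf n 1 + \<gamma> * qf n 2)"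
      using \<alpha>0 \<beta>0 \<gamma>0 b0 n1 qf_nonneg[of n] by (intro ennreal_comb) auto
    then show ?thesis using calc unfolding sp I3 I1 I2 by (simp only:)
  qed
  also have "\<dots> \<le> ennreal ((1 + b) * L1 * \<sigma>r * sqrt ((1 + 3 * \<sigma>r\<^sup>2) * real DIM('a) * (real DIM('a) + 6) ^ 3) * \<bar>f x\<bar>
                  + 3 * L0\<^sup>2 * \<sigma>r\<^sup>2 * (real DIM('a) + 4)\<^sup>2)"
  proof (intro ennreal_leI)
    define Z where "Z = (1 + 3 * \<sigma>r\<^sup>2) * (n + 6) ^ 3"
    have Zpos: "Z > 0" unfolding Z_def using n1 by (intro mult_pos_pos) (auto intro: add_pos_nonneg)
    have nZ: "n * (n + 2) * (n + 4) \<le> (sqrt Z)^2"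
    proof -
      have "n * (n + 2) * (n + 4) \<le> (n + 6) * (n + 6) * (n + 6)"
        using n1 by (intro mult_mono) auto
      also have "\<dots> \<le> Z" unfolding Z_def using n1 by (simp add: power3_eq_cube)
      finally show ?thesis using Zpos by simp
    qed
    have C2: "C^2 = 4 * \<sigma>r * sqrt n / (L1 * sqrt Z)"
    proof -
      have "C^2 = C * C" by (simp add: power2_eq_square)
      also have "\<dots> = (16 * \<sigma>r\<^sup>2 * n / (L1\<^sup>2 * Z)) powr (1/2)"
        unfolding C_def Z_def by (simp add: powr_add[symmetric] mult.assoc)
      also have "\<dots> = sqrt (16 * \<sigma>r\<^sup>2 * n / (L1\<^sup>2 * Z))" using Zpos n1 by (intro powr_half_sqrt) auto
      also have "\<dots> = 4 * \<sigma>r * sqrt n / (L1 * sqrt Z)"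
        using \<sigma>r_pos L1_pos by (simp add: real_sqrt_divide real_sqrt_mult)
      finally show ?thesis .
    qed
    have K: "sqrt ((1 + 3 * \<sigma>r\<^sup>2) * real DIM('a) * (real DIM('a) + 6) ^ 3) = sqrt n * sqrt Z"
      unfolding Z_def n_def by (simp add: real_sqrt_mult[symmetric] mult_ac)
    have "\<alpha> * qf n 3 + \<beta> * b * qf n 1 + \<gamma> * qf n 2
       = L1^2 * C^2 * \<bar>f x\<bar> / 4 * (n * (n + 2) * (n + 4)) + 3 * \<sigma>r^2 * \<bar>f x\<bar> / C^2 * b * n + 2 * \<sigma>r^2 * L0^2 * (n * (n + 2))"
      unfolding \<alpha>_def \<beta>_def \<gamma>_def qf_def by simp
    also have "\<dots> \<le> (1 + b) * L1 * \<sigma>r * (sqrt n * sqrt Z) * \<bar>f x\<bar> + 3 * L0^2 * \<sigma>r^2 * (n + 4)^2"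
      by (rule final_arith[OF _ _ _ nZ C2 \<sigma>r_pos L1_pos b0]) (use n1 Zpos in auto)
    finally show "\<alpha> * qf n 3 + \<beta> * b * qf n 1 + \<gamma> * qf n 2 \<le> (1 + b) * L1 * \<sigma>r * sqrt ((1 + 3 * \<sigma>r\<^sup>2) * real DIM('a) * (real DIM('a) + 6) ^ 3) * \<bar>f x\<bar>
                  + 3 * L0\<^sup>2 * \<sigma>r\<^sup>2 * (real DIM('a) + 4)\<^sup>2" unfolding K n_def .
  qed
  finally have main: "(\<integral>\<^sup>+ (u, v1, v2, v3). ennreal (E u v1 v2 v3) \<partial>((std_gaussian::'a measure) \<Otimes>\<^sub>M (N \<Otimes>\<^sub>M (N \<Otimes>\<^sub>M N))))
     \<le> ennreal ((1 + b) * L1 * \<sigma>r * sqrt ((1 + 3 * \<sigma>r\<^sup>2) * real DIM('a) * (real DIM('a) + 6) ^ 3) * \<bar>f x\<bar>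
                  + 3 * L0\<^sup>2 * \<sigma>r\<^sup>2 * (real DIM('a) + 4)\<^sup>2)" .
  have nrm: "(norm (s *\<^sub>R u - t *\<^sub>R u))\<^sup>2 = (s - t)^2 * norm u ^ 2" for s t :: real and u :: 'a
    by (simp add: scaleR_diff_left[symmetric] power_mult_distrib)
  show ?thesis
    using main unfolding E_def mu_def C_def n_def Let_def nrm .
qed


end
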